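(* Let $\mathbf{Y}\sim\mathcal{MMN}_p(\boldsymbol{\xi},\mathbf{\Omega},\boldsymbol{\delta};H)$, let $\mathbf{A}$ be a full-rank $p\times h$ matrix with $h\le p$, and let $\mathbf{c}\in\mathbb{R}^h$. Then $\mathbf{T}=\mathbf{c}+\mathbf{A}^\top\mathbf{Y}\sim\mathcal{MMN}_h(\boldsymbol{\xi}_{\mathbf{T}},\mathbf{\Omega}_{\mathbf{T}},\boldsymbol{\delta}_{\mathbf{T}};H)$, where $\boldsymbol{\xi}_{\mathbf{T}}=\mathbf{c}+\mathbf{A}^\top\boldsymbol{\xi}$, $\mathbf{\Omega}_{\mathbf{T}}=\mathbf{A}^\top\mathbf{\Omega}\mathbf{A}$, and $\boldsymbol{\delta}_{\mathbf{T}}=\boldsymbol{\omega}_{\mathbf{T}}^{-1}\mathbf{A}^\top\boldsymbol{\omega}\boldsymbol{\delta}$ with $\boldsymbol{\omega}_{\mathbf{T}}=(\mathbf{\Omega}_{\mathbf{T}}\odot\mathbf{I}_h)^{1/2}$.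
   Context: For $d\ge1$, $\boldsymbol{\xi}\in\mathbb{R}^d$, a $d\times d$ symmetric positive definite $\mathbf{\Omega}$, put $\boldsymbol{\omega}=(\mathbf{\Omega}\odot\mathbf{I}_d)^{1/2}=\mathrm{diag}(\mathbf{\Omega}_{11}^{1/2},\dots,\mathbf{\Omega}_{dd}^{1/2})$ ($\odot$ = Hadamard product) and $\overline{\mathbf{\Omega}}=\boldsymbol{\omega}^{-1}\mathbf{\Omega}\boldsymbol{\omega}^{-1}$; let $\boldsymbol{\delta}\in\mathbb{R}^d$ with $\overline{\mathbf{\Omega}}-\boldsymbol{\delta}\boldsymbol{\delta}^\top$ positive definite. For a real random variable $U$ with CDF $H$ and $\mathbf{Z}\sim\mathcal{N}_d(\mathbf{0},\overline{\mathbf{\Omega}}-\boldsymbol{\delta}\boldsymbol{\delta}^\top)$ independent of $U$, the law of $\boldsymbol{\xi}+\boldsymbol{\omega}(\boldsymbol{\delta}U+\mathbf{Z})$ is denoted $\mathcal{MMN}_d(\boldsymbol{\xi},\mathbf{\Omega},\boldsymbol{\delta};H)$. In the claim $\boldsymbol{\omega}$ refers to $\mathbf{\Omega}$ (dimension $p$). *)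

theory Defs
  imports "HOL-Probability.Probability"
begin

(* H is the CDF of a real random variable *)
definition is_cdf :: "(real \<Rightarrow> real) \<Rightarrow> bool" where
  "is_cdf H \<longleftrightarrow> mono H \<and> (\<forall>a. continuous (at_right a) H)
     \<and> (H \<longlongrightarrow> 0) at_bot \<and> (H \<longlongrightarrow> 1) at_top"

(* the probability law on the reals with CDF H *)
definition law_of_cdf :: "(real \<Rightarrow> real) \<Rightarrow> real measure" where
  "law_of_cdf H = interval_measure H"

definition sym_pd :: "real^'d^'d \<Rightarrow> bool" where
  "sym_pd S \<longleftrightarrow> transpose S = S \<and> (\<forall>x. x \<noteq> 0 \<longrightarrow> x \<bullet> (S *v x) > 0)"

(* omega = (Omega Hadamard I)^(1/2) *)
definition diag_sqrt :: "real^'d^'d \<Rightarrow> real^'d^'d" where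
  "diag_sqrt S = (\<chi> i j. if i = j then sqrt (S $ i $ i) else 0)"

(* Omega-bar = omega^-1 Omega omega^-1 *)
definition corr_mat :: "real^'d^'d \<Rightarrow> real^'d^'d" where
  "corr_mat S = matrix_inv (diag_sqrt S) ** S ** matrix_inv (diag_sqrt S)"

definition outer :: "real^'d \<Rightarrow> real^'d^'d" where
  "outer u = (\<chi> i j. u $ i * u $ j)"

(* multivariate normal law N_d(m, Sigma), characterised by its characteristic function *)
definition gaussian_law :: "(real^'d) measure \<Rightarrow> real^'d \<Rightarrow> real^'d^'d \<Rightarrow> bool" where
  "gaussian_law \<mu> m S \<longleftrightarrow> prob_space \<mu> \<and> sets \<mu> = sets borel \<and>
     (\<forall>t. integral\<^sup>L \<mu> (\<lambda>x. cis (t \<bullet> x))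
            = cis (t \<bullet> m) * complex_of_real (exp (- (t \<bullet> (S *v t)) / 2)))"

(* mu is the law MMN_d(xi, Omega, delta; H): law of xi + omega (delta U + Z),
   U with CDF H, Z ~ N_d(0, Omega-bar - delta delta^T), U and Z independent *)
definition MMN_law :: "(real^'d) measure \<Rightarrow> real^'d \<Rightarrow> real^'d^'d \<Rightarrow> real^'d
                       \<Rightarrow> (real \<Rightarrow> real) \<Rightarrow> bool" where
  "MMN_law \<mu> xi Om del H \<longleftrightarrow>
     sym_pd Om \<and> sym_pd (corr_mat Om - outer del) \<and> is_cdf H \<and>
     (\<exists>\<nu>. gaussian_law \<nu> 0 (corr_mat Om - outer del) \<and>
        \<mu> = distr (law_of_cdf H \<Otimes>\<^sub>M \<nu>) borel
               (\<lambda>(u, z). xi + diag_sqrt Om *v (u *\<^sub>R del + z)))"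

end

theory Submission
  imports Defs
begin

definition dg :: "real^'d \<Rightarrow> real^'d^'d" where
  "dg v = (\<chi> i j. if i = j then v $ i else 0)"

lemma dg_mulv: "dg v *v x = (\<chi> i. v $ i * x $ i)"
proof -
  have "\<And>i. (\<Sum>j\<in>UNIV. (if i = j then v $ i else 0) * x $ j) = v $ i * x $ i"
  proof -
    fix i
    have "(\<Sum>j\<in>UNIV. (if i = j then v $ i else 0) * x $ j) = (\<Sum>j\<in>UNIV. if i = j then v $ i * x $ j else 0)"
      by (rule sum.cong) auto
    then show "(\<Sum>j\<in>UNIV. (if i = j then v $ i else 0) * x $ j) = v $ i * x $ i" by simp
  qed
  then show ?thesis by (simp add: dg_def matrix_vector_mult_def vec_eq_iff)
qed

lemma dg_transpose: "transpose (dg v) = dg v"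
  by (simp add: dg_def transpose_def vec_eq_iff)

lemma dg_mul: "dg v ** dg w = dg (\<chi> i. v $ i * w $ i)"
proof -
  have "\<And>i j. (\<Sum>k\<in>UNIV. (if i = k then v $ i else 0) * (if k = j then w $ k else 0))
     = (if i = j then v $ i * w $ i else 0)"
  proof -
    fix i j :: 'a
    have "(\<Sum>k\<in>UNIV. (if i = k then v $ i else 0) * (if k = j then w $ k else 0))
       = (\<Sum>k\<in>UNIV. if k = i then (if i = j then v $ i * w $ i else 0) else 0)"
      by (rule sum.cong) auto
    then show "(\<Sum>k\<in>UNIV. (if i = k then v $ i else 0) * (if k = j then w $ k else 0))
     = (if i = j then v $ i * w $ i else 0)" by simp
  qed
  then show ?thesis by (simp add: dg_def matrix_matrix_mult_def vec_eq_iff)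
qed

lemma dg_one: "dg (\<chi> i. 1) = mat 1"
  by (simp add: dg_def mat_def vec_eq_iff)

lemma matrix_inv_eq:
  assumes "A ** B = mat 1" "B ** A = mat 1"
  shows "matrix_inv A = B"
  unfolding matrix_inv_def
proof (rule some_equality)
  show "A ** B = mat 1 \<and> B ** A = mat 1" using assms by simp
next
  fix B' assume h: "A ** B' = mat 1 \<and> B' ** A = mat 1"
  have "B' = B' ** (A ** B)" using assms by simp
  also have "\<dots> = (B' ** A) ** B" by (simp add: matrix_mul_assoc)
  also have "\<dots> = B" using h by simp
  finally show "B' = B" .
qed

lemma diag_sqrt_dg: "diag_sqrt S = dg (\<chi> i. sqrt (S $ i $ i))"
  by (simp add: diag_sqrt_def dg_def vec_eq_iff)

lemma inv_diag_sqrt: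
  assumes "\<And>i. S $ i $ i > 0"
  shows "matrix_inv (diag_sqrt S) = dg (\<chi> i. 1 / sqrt (S $ i $ i))"
  unfolding diag_sqrt_dg
  proof (rule matrix_inv_eq)
  have "\<And>i. S $ i $ i \<noteq> 0" using assms less_irrefl by metis
  then show "dg (\<chi> i. sqrt (S $ i $ i)) ** dg (\<chi> i. 1 / sqrt (S $ i $ i)) = mat 1"
     "dg (\<chi> i. 1 / sqrt (S $ i $ i)) ** dg (\<chi> i. sqrt (S $ i $ i)) = mat 1"
    by (simp_all add: dg_mul dg_one[symmetric])
qed

lemma sym_pd_diag:
  assumes "sym_pd S" shows "S $ i $ i > 0"
proof -
  have "axis i (1::real) \<bullet> (S *v axis i 1) > 0"
    using assms unfolding sym_pd_def by (simp add: axis_eq_0_iff)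
  moreover have "axis i (1::real) \<bullet> (S *v axis i 1) = S $ i $ i"
  proof -
    have "S *v axis i 1 = (\<chi> k. S $ k $ i)"
      by (simp add: matrix_vector_mult_def axis_def if_distrib[of "\<lambda>a. _ * a"] cong: if_cong)
    then show ?thesis using cart_eq_inner_axis[of "\<chi> k. S $ k $ i" i] by (simp add: inner_commute)
  qed
  ultimately show ?thesis by simp
qed

lemma outer_mulv: "outer (M *v v) = M ** outer v ** transpose M"
  by (simp add: outer_def vec_eq_iff matrix_matrix_mult_def matrix_vector_mult_def transpose_def
      sum_distrib_left sum_distrib_right mult_ac)

lemma mat_diff_sandwich: "L ** (C - Oo) ** transpose L = L ** C ** transpose L - L ** Oo ** transpose L"
  for L :: "real^'a^'b"
  by (simp add: vec_eq_iff matrix_matrix_mult_def algebra_simps sum_subtractf)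

lemma quad_sandwich: "x \<bullet> ((L ** S ** transpose L) *v x) = (transpose L *v x) \<bullet> (S *v (transpose L *v x))"
  for L :: "real^'a^'b"
  by (metis dot_lmul_matrix matrix_vector_mul_assoc transpose_matrix_vector)

lemma transpose_sandwich: "transpose (S::real^'a^'a) = S \<Longrightarrow> transpose (L ** S ** transpose L) = L ** S ** transpose (L::real^'a^'b)"
  by (simp add: matrix_transpose_mul matrix_mul_assoc)


lemma dg_mulv_eq0:
  assumes "dg v *v x = 0" "\<And>i. v $ i \<noteq> 0" shows "x = 0"
  using assms by (simp add: dg_mulv vec_eq_iff)

theorem theorem4:
  fixes M :: "'s measure"
    and Y :: "'s \<Rightarrow> real^'p"
    and xi :: "real^'p" and Om :: "real^'p^'p" and del :: "real^'p"
    and H :: "real \<Rightarrow> real"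
    and A :: "real^'h^'p" and c :: "real^'h"
  assumes "prob_space M"
    and "Y \<in> borel_measurable M"
    and "MMN_law (distr M borel Y) xi Om del H"
    and "CARD('h) \<le> CARD('p)"
    and "rank A = CARD('h)"
  shows "MMN_law (distr M borel (\<lambda>s. c + transpose A *v Y s))
           (c + transpose A *v xi)
           (transpose A ** Om ** A)
           (matrix_inv (diag_sqrt (transpose A ** Om ** A)) *v (transpose A *v (diag_sqrt Om *v del)))
           H"
proof -
  define S0 where "S0 = corr_mat Om - outer del"
  from assms(3) obtain \<nu> where pdOm: "sym_pd Om" and pdS0: "sym_pd S0" and cdf: "is_cdf H"
    and gn: "gaussian_law \<nu> 0 S0"
    and Yd: "distr M borel Y = distr (law_of_cdf H \<Otimes>\<^sub>M \<nu>) borel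
               (\<lambda>(u, z). xi + diag_sqrt Om *v (u *\<^sub>R del + z))"
    unfolding MMN_law_def S0_def by blast
  define At where "At = transpose A"
  define OmT where "OmT = At ** Om ** A"
  define D where "D = diag_sqrt Om"
  define Di where "Di = dg (\<chi> i. 1 / sqrt (Om $ i $ i))"
  define DT where "DT = diag_sqrt OmT"
  define DTi where "DTi = dg (\<chi> i. 1 / sqrt (OmT $ i $ i))"
  define L where "L = DTi ** At ** D"
  define delT where "delT = DTi *v (At *v (D *v del))"
  have injA: "inj ((*v) A)" using assms(5) full_rank_injective by blast
  have Ompos: "\<And>i. Om $ i $ i > 0" using pdOm sym_pd_diag by blast
  have symOm: "transpose Om = Om" using pdOm sym_pd_def by blast
  have pdOmT: "sym_pd OmT"
    unfolding sym_pd_def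
  proof (intro conjI allI impI)
    show "transpose OmT = OmT" unfolding OmT_def At_def
      using symOm by (simp add: matrix_transpose_mul matrix_mul_assoc)
  next
    fix x :: "real^'h" assume "x \<noteq> 0"
    then have "A *v x \<noteq> 0" using injA by (metis injD matrix_vector_mult_0_right)
    then have "(A *v x) \<bullet> (Om *v (A *v x)) > 0" using pdOm sym_pd_def by blast
    moreover have "x \<bullet> (OmT *v x) = (A *v x) \<bullet> (Om *v (A *v x))"
    proof -
      have "x \<bullet> (OmT *v x) = x \<bullet> (transpose A *v (Om *v (A *v x)))"
        unfolding OmT_def At_def by (simp only: matrix_vector_mul_assoc matrix_mul_assoc)
      also have "\<dots> = (Om *v (A *v x)) \<bullet> (A *v x)"
        by (metis transpose_matrix_vector dot_lmul_matrix inner_commute)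
      also have "\<dots> = (A *v x) \<bullet> (Om *v (A *v x))" by (rule inner_commute)
      finally show ?thesis .
    qed
    ultimately show "x \<bullet> (OmT *v x) > 0" by simp
  qed
  have OmTpos: "\<And>i. OmT $ i $ i > 0" using pdOmT sym_pd_diag by blast
  have Dinv: "matrix_inv D = Di" unfolding D_def Di_def using inv_diag_sqrt Ompos by blast
  have DTinv: "matrix_inv DT = DTi" unfolding DT_def DTi_def using inv_diag_sqrt OmTpos by blast
  have DDi: "D ** Di = mat 1" "Di ** D = mat 1"
    unfolding D_def Di_def diag_sqrt_dg using Ompos
    by (simp_all add: dg_mul dg_one[symmetric] less_imp_neq[symmetric])
  have DTDTi: "DT ** DTi = mat 1" "DTi ** DT = mat 1"
    unfolding DT_def DTi_def diag_sqrt_dg using OmTpos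
    by (simp_all add: dg_mul dg_one[symmetric] less_imp_neq[symmetric])
  have trD: "transpose D = D" unfolding D_def diag_sqrt_dg by (rule dg_transpose)
  have trDTi: "transpose DTi = DTi" unfolding DTi_def by (rule dg_transpose)
  have trL: "transpose L = D ** A ** DTi"
    unfolding L_def At_def by (simp add: matrix_transpose_mul trD trDTi matrix_mul_assoc)
  have delT_L: "delT = L *v del" unfolding delT_def L_def by (simp only: matrix_vector_mul_assoc matrix_mul_assoc)
  have corrT: "corr_mat OmT = L ** corr_mat Om ** transpose L"
  proof -
    have "L ** corr_mat Om ** transpose L = DTi ** At ** (D ** Di) ** Om ** (Di ** D) ** A ** DTi"
      unfolding trL unfolding corr_mat_def Dinv[unfolded D_def] L_def D_def by (simp only: matrix_mul_assoc)
    also have "\<dots> = DTi ** OmT ** DTi" unfolding DDi OmT_def by (simp only: matrix_mul_assoc matrix_mul_rid)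
    finally show ?thesis unfolding corr_mat_def DTinv[unfolded DT_def] by simp
  qed
  define ST where "ST = corr_mat OmT - outer delT"
  have ST: "ST = L ** S0 ** transpose L"
    unfolding ST_def S0_def corrT delT_L outer_mulv mat_diff_sandwich ..
  have symS0: "transpose S0 = S0" using pdS0 sym_pd_def by blast
  have Dd: "D = dg (\<chi> i. sqrt (Om $ i $ i))" unfolding D_def diag_sqrt_dg ..
  have pdST: "sym_pd ST"
    unfolding sym_pd_def
  proof (intro conjI allI impI)
    show "transpose ST = ST" unfolding ST using symS0 by (rule transpose_sandwich)
  next
    fix x :: "real^'h" assume x0: "x \<noteq> 0"
    have "transpose L *v x \<noteq> 0"
    proof
      assume h: "transpose L *v x = 0"
      have "D *v (A *v (DTi *v x)) = 0" using h
        by (simp only: trL matrix_vector_mul_assoc matrix_mul_assoc)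
      then have "dg (\<chi> i. sqrt (Om $ i $ i)) *v (A *v (DTi *v x)) = 0" by (simp only: Dd)
      moreover have "\<And>i. (\<chi> i. sqrt (Om $ i $ i)) $ i \<noteq> 0" using Ompos
        by (metis less_irrefl real_sqrt_eq_zero_cancel_iff vec_lambda_beta)
      ultimately have "A *v (DTi *v x) = 0" by (rule dg_mulv_eq0)
      then have "DTi *v x = 0" using injA by (metis injD matrix_vector_mult_0_right)
      then have "dg (\<chi> i. 1 / sqrt (OmT $ i $ i)) *v x = 0" by (simp only: DTi_def)
      moreover have "\<And>i. (\<chi> i. 1 / sqrt (OmT $ i $ i)) $ i \<noteq> 0" using OmTpos
        by (metis less_irrefl real_sqrt_eq_zero_cancel_iff vec_lambda_beta divide_eq_0_iff one_neq_zero)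
      ultimately have "x = 0" by (rule dg_mulv_eq0)
      with x0 show False by simp
    qed
    then have "(transpose L *v x) \<bullet> (S0 *v (transpose L *v x)) > 0" using pdS0 sym_pd_def by blast
    then show "x \<bullet> (ST *v x) > 0" unfolding ST quad_sandwich .
  qed
  have s\<nu>: "sets \<nu> = sets borel" and p\<nu>: "prob_space \<nu>"
    and ch\<nu>: "\<And>t. integral\<^sup>L \<nu> (\<lambda>x. cis (t \<bullet> x)) = cis (t \<bullet> 0) * complex_of_real (exp (- (t \<bullet> (S0 *v t)) / 2))"
    using gn unfolding gaussian_law_def by auto
  have mL: "(*v) L \<in> borel_measurable borel"
    by (intro borel_measurable_continuous_onI continuous_intros bounded_linear.continuous_on[OF matrix_vector_mul_bounded_linear])
  have mL\<nu>: "(*v) L \<in> measurable \<nu> borel" by (subst measurable_cong_sets[OF s\<nu> refl]) (rule mL)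
  define \<nu>' where "\<nu>' = distr \<nu> borel ((*v) L)"
  have p\<nu>': "prob_space \<nu>'" unfolding \<nu>'_def using prob_space.prob_space_distr[OF p\<nu> mL\<nu>] .
  have gn': "gaussian_law \<nu>' 0 ST"
    unfolding gaussian_law_def
  proof (intro conjI allI)
    show "prob_space \<nu>'" by (rule p\<nu>')
    show "sets \<nu>' = sets borel" unfolding \<nu>'_def by simp
  next
    fix t :: "real^'h"
    have mc: "(\<lambda>x::real^'h. cis (t \<bullet> x)) \<in> borel_measurable borel"
      by (intro borel_measurable_continuous_onI continuous_intros bounded_linear.continuous_on[OF matrix_vector_mul_bounded_linear])
    have "integral\<^sup>L \<nu>' (\<lambda>x. cis (t \<bullet> x)) = integral\<^sup>L \<nu> (\<lambda>z. cis (t \<bullet> (L *v z)))"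
      unfolding \<nu>'_def by (rule integral_distr[OF mL\<nu> mc])
    also have "\<dots> = integral\<^sup>L \<nu> (\<lambda>z. cis ((transpose L *v t) \<bullet> z))"
      by (simp only: transpose_matrix_vector dot_lmul_matrix)
    also have "\<dots> = cis ((transpose L *v t) \<bullet> 0) * complex_of_real (exp (- ((transpose L *v t) \<bullet> (S0 *v (transpose L *v t))) / 2))"
      by (rule ch\<nu>)
    also have "\<dots> = cis (t \<bullet> 0) * complex_of_real (exp (- (t \<bullet> (ST *v t)) / 2))"
      unfolding ST quad_sandwich by simp
    finally show "integral\<^sup>L \<nu>' (\<lambda>x. cis (t \<bullet> x)) = cis (t \<bullet> 0) * complex_of_real (exp (- (t \<bullet> (ST *v t)) / 2))" .
  qed
  define Lw where "Lw = law_of_cdf H"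
  have sLw: "sets Lw = sets borel" unfolding Lw_def law_of_cdf_def by simp
  have rLw: "real_distribution Lw" unfolding Lw_def law_of_cdf_def
    using cdf unfolding is_cdf_def by (intro real_distribution_interval_measure) (auto simp: mono_def)
  then have pLw: "prob_space Lw" by (simp add: real_distribution_def)
  define P where "P = Lw \<Otimes>\<^sub>M \<nu>"
  define f where "f = (\<lambda>(u::real, z::real^'p). xi + D *v (u *\<^sub>R del + z))"
  define g where "g = (\<lambda>y::real^'p. c + At *v y)"
  define f' where "f' = (\<lambda>(u::real, z::real^'h). (c + At *v xi) + DT *v (u *\<^sub>R delT + z))"
  define h where "h = (\<lambda>(x::real, y::real^'p). (x, L *v y))"
  have mg: "g \<in> borel_measurable borel" unfolding g_def
    by (intro borel_measurable_continuous_onI continuous_intros bounded_linear.continuous_on[OF matrix_vector_mul_bounded_linear])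
  have mf: "f \<in> measurable P borel"
  proof -
    have "f \<in> borel_measurable (borel \<Otimes>\<^sub>M borel)" unfolding borel_prod f_def case_prod_unfold
      by (intro borel_measurable_continuous_onI continuous_intros bounded_linear.continuous_on[OF matrix_vector_mul_bounded_linear])
    then show ?thesis unfolding P_def by (subst measurable_cong_sets[OF sets_pair_measure_cong[OF sLw s\<nu>] refl])
  qed
  have mf': "f' \<in> measurable (Lw \<Otimes>\<^sub>M borel) borel"
  proof -
    have "f' \<in> borel_measurable (borel \<Otimes>\<^sub>M borel)" unfolding borel_prod f'_def case_prod_unfold
      by (intro borel_measurable_continuous_onI continuous_intros bounded_linear.continuous_on[OF matrix_vector_mul_bounded_linear])
    then show ?thesis by (subst measurable_cong_sets[OF sets_pair_measure_cong[OF sLw refl] refl])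
  qed
  have mh: "h \<in> measurable P (Lw \<Otimes>\<^sub>M borel)" unfolding h_def P_def case_prod_unfold
    by (intro measurable_Pair measurable_fst'' measurable_compose[OF measurable_snd mL\<nu>]) simp
  have sf\<nu>': "sigma_finite_measure \<nu>'" using p\<nu>' by (simp add: prob_space_imp_sigma_finite)
  have prodeq: "Lw \<Otimes>\<^sub>M \<nu>' = distr P (Lw \<Otimes>\<^sub>M borel) h"
    using pair_measure_distr[OF measurable_ident_sets[OF refl] mL\<nu>, of Lw] sf\<nu>'
    unfolding \<nu>'_def h_def P_def by simp
  have pt: "g (f x) = f' (h x)" for x
  proof -
    obtain u z where x: "x = (u, z)" by fastforce
    have e1: "DT *v delT = At *v (D *v del)"
      unfolding delT_def by (simp only: matrix_vector_mul_assoc matrix_mul_assoc DTDTi matrix_mul_lid)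
    have e2: "DT *v (L *v z) = At *v (D *v z)"
      unfolding L_def by (simp only: matrix_vector_mul_assoc DTDTi matrix_mul_lid matrix_mul_assoc)
    show ?thesis unfolding x f_def g_def f'_def h_def
      using e1 e2 by (simp add: matrix_vector_right_distrib matrix_vector_mult_scaleR add.assoc)
  qed
  have "distr M borel (\<lambda>s. c + transpose A *v Y s) = distr (distr M borel Y) borel g"
    using distr_distr[OF mg assms(2)] unfolding g_def At_def by (simp add: comp_def)
  also have "\<dots> = distr P borel (g \<circ> f)"
  proof -
    have Yd': "distr M borel Y = distr P borel f" unfolding P_def f_def Lw_def D_def by (rule Yd)
    show ?thesis unfolding Yd' by (rule distr_distr[OF mg mf])
  qed
  also have "\<dots> = distr P borel (f' \<circ> h)"
    by (rule distr_cong) (simp_all add: pt)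
  also have "\<dots> = distr (Lw \<Otimes>\<^sub>M \<nu>') borel f'"
    unfolding prodeq by (rule distr_distr[OF mf' mh, symmetric])
  finally have deq: "distr M borel (\<lambda>s. c + transpose A *v Y s) = distr (Lw \<Otimes>\<^sub>M \<nu>') borel f'" .
  have delT_eq: "matrix_inv (diag_sqrt (transpose A ** Om ** A)) *v (transpose A *v (diag_sqrt Om *v del)) = delT"
    unfolding delT_def DTinv[unfolded DT_def OmT_def At_def, symmetric] D_def At_def ..
  show ?thesis
    unfolding MMN_law_def delT_eq
  proof (intro conjI exI)
    show "sym_pd (transpose A ** Om ** A)" using pdOmT unfolding OmT_def At_def .
    show "sym_pd (corr_mat (transpose A ** Om ** A) - outer delT)" using pdST unfolding ST_def OmT_def At_def .
    show "is_cdf H" by (rule cdf)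
    show "gaussian_law \<nu>' 0 (corr_mat (transpose A ** Om ** A) - outer delT)"
      using gn' unfolding ST_def OmT_def At_def .
    show "distr M borel (\<lambda>s. c + transpose A *v Y s) = distr (law_of_cdf H \<Otimes>\<^sub>M \<nu>') borel
      (\<lambda>(u, z). c + transpose A *v xi + diag_sqrt (transpose A ** Om ** A) *v (u *\<^sub>R delT + z))"
      using deq unfolding Lw_def f'_def DT_def OmT_def At_def .
  qed
qed

end
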